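(* Assume that Hypotheses \textbf{H1} and \textbf{H2} hold. The steady states $\mathcal{E}_{00}^{02}$, $\mathcal{E}_{00}^{12}$, $\mathcal{E}_{10}^{12}$, $\mathcal{E}_{02}^{01}$, $\mathcal{E}_{02}^{11}$ and $\mathcal{E}_{12}^{11}$ of the system are unstable when they exist.
   Context: Consider the system of two interconnected chemostats in series \[ \begin{aligned} \dot{S}_1^1 &= D_1(S_1^{\text{in}}- S_1^1)-k_1\mu_1(S_1^1) X_1^1, & \dot{X}_1^1 &=(\mu_1(S_1^1) - \alpha D_1)X_1^1,\\ \dot{S}_2^1 &= D_1(S_2^{\text{in}}- S_2^1)+k_2\mu_1(S_1^1)X_1^1-k_3\mu_2(S_2^1) X_2^1, & \dot{X}_2^1 &=(\mu_2(S_2^1) - \alpha D_1)X_2^1,\\ \dot{S}_1^2 &= D_2(S_1^1- S_1^2)-k_1\mu_1(S_1^2) X_1^2, & \dot{X}_1^2 &= \alpha D_2(X_1^1- X_1^2)+\mu_1(S_1^2)X_1^2,\\ \dot{S}_2^2 &= D_2(S_2^1- S_2^2)+k_2\mu_1(S_1^2)X_1^2-k_3\mu_2(S_2^2) X_2^2, & \dot{X}_2^2 &= \alpha D_2(X_2^1- X_2^2)+\mu_2(S_2^2)X_2^2, \end{aligned} \] where $D_i=D/r_i$ with $r_1=r\in(0,1)$, $r_2=1-r$, $\alpha\in(0,1)$, and $k_1,k_2,k_3>0$. The growth functions are $\mathcal{C}^1(\mathbb{R}_+)$ and satisfy: \textbf{H1}: $\mu_1(0)=0$, $\mu_1(+\infty)=m_1$,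 $\mu_1'(S_1)>0$ for all $S_1>0$; \textbf{H2}: $\mu_2(0)=0$, $\mu_2(+\infty)=0$, and there exists $S_2^{\text{m}}>0$ with $\mu_2'>0$ on $(0,S_2^{\text{m}})$ and $\mu_2'<0$ on $(S_2^{\text{m}},\infty)$. Let $\lambda_1^i$ be the solution of $\mu_1(S_1)=\alpha D_i$ and $\lambda_2^{i1}<\lambda_2^{i2}$ the two solutions of $\mu_2(S_2)=\alpha D_i$, $i=1,2$. A steady state $\mathcal{E}_{ij}^{kl}$ is labeled as follows: the lower indices refer to reactor 1 and the upper to reactor 2; the first index is $1$ if the first biomass ($X_1^1$, resp. $X_1^2$) is positive and $0$ if it is zero; the second index is $0$ if the second biomass ($X_2^1$, resp. $X_2^2$) is zero and otherwise indicates the type of positive second biomass. Concretely: $\mathcal{E}_{00}^{02}$ has reactor 1 at washout $(S_1^{\text{in}},0,S_2^{\text{in}},0)$ and reactor 2 equal to $(S_1^{\text{in}},0,\lambda_2^{22},(S_2^{\text{in}}-\lambda_2^{22})/(\alpha k_3))$; $\mathcal{E}_{00}^{12}$ has reactor 1 at washout and reactor 2 equal to $(\lambda_1^2,(S_1^{\text{in}}-\lambda_1^2)/(\alpha k_1),\lambda_2^{22},X_2^2)$ with $X_2^2>0$; $\mathcal{E}_{10}^{12}$ has reactor 1 equal to $(\lambda_1^1,(S_1^{\text{in}}-\lambda_1^1)/(\alpha k_1),S_2^{\text{in}}+\tfrac{k_2}{k_1}(S_1^{\text{in}}-\lambda_1^1),0)$ and reactor 2 with $X_1^2>0$, $S_2^2=\lambda_2^{22}$,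 $X_2^2>0$; $\mathcal{E}_{02}^{01}$ and $\mathcal{E}_{02}^{11}$ have reactor 1 equal to $(S_1^{\text{in}},0,\lambda_2^{12},(S_2^{\text{in}}-\lambda_2^{12})/(\alpha k_3))$ and, in reactor 2, $X_1^2=0,X_2^2>0$ resp. $X_1^2>0,X_2^2>0$; $\mathcal{E}_{12}^{11}$ has reactor 1 equal to $(\lambda_1^1,(S_1^{\text{in}}-\lambda_1^1)/(\alpha k_1),\lambda_2^{12},X_2^1)$ with $X_2^1>0$, and in reactor 2 $X_1^2>0$, $X_2^2>0$. *)

theory Defs
  imports "HOL-Analysis.Analysis"
begin

text \<open>State vector of the two chemostats in series, as an element of real^8.
  Coordinate convention (indices of type 8):
  0 = S_1^1, 1 = X_1^1, 2 = S_2^1, 3 = X_2^1   (reactor 1)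
  4 = S_1^2, 5 = X_1^2, 6 = S_2^2, 7 = X_2^2   (reactor 2).\<close>

definition chemo_field ::
  "(real \<Rightarrow> real) \<Rightarrow> (real \<Rightarrow> real) \<Rightarrow> real \<Rightarrow> real \<Rightarrow> real \<Rightarrow>
   real \<Rightarrow> real \<Rightarrow> real \<Rightarrow> real \<Rightarrow> real \<Rightarrow> real^8 \<Rightarrow> real^8" where
  "chemo_field \<mu>1 \<mu>2 D r \<alpha> k1 k2 k3 S1in S2in x =
    (let D1 = D / r; D2 = D / (1 - r);
         S11 = x $ 0; X11 = x $ 1; S21 = x $ 2; X21 = x $ 3;
         S12 = x $ 4; X12 = x $ 5; S22 = x $ 6; X22 = x $ 7;
         f0 = D1 * (S1in - S11) - k1 * \<mu>1 S11 * X11;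
         f1 = (\<mu>1 S11 - \<alpha> * D1) * X11;
         f2 = D1 * (S2in - S21) + k2 * \<mu>1 S11 * X11 - k3 * \<mu>2 S21 * X21;
         f3 = (\<mu>2 S21 - \<alpha> * D1) * X21;
         f4 = D2 * (S11 - S12) - k1 * \<mu>1 S12 * X12;
         f5 = \<alpha> * D2 * (X11 - X12) + \<mu>1 S12 * X12;
         f6 = D2 * (S21 - S22) + k2 * \<mu>1 S12 * X12 - k3 * \<mu>2 S22 * X22;
         f7 = \<alpha> * D2 * (X21 - X22) + \<mu>2 S22 * X22
     in (\<chi> i. if i = 0 then f0 else if i = 1 then f1 else if i = 2 then f2
               else if i = 3 then f3 else if i = 4 then f4 else if i = 5 then f5
               else if i = 6 then f6 else f7))"

definition orthant8 :: "(real^8) set" where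
  "orthant8 = {x. \<forall>i. 0 \<le> x $ i}"

definition steady_state :: "(real^8 \<Rightarrow> real^8) \<Rightarrow> real^8 \<Rightarrow> bool" where
  "steady_state F E \<longleftrightarrow> E \<in> orthant8 \<and> F E = 0"

text \<open>Instability of a steady state in the sense used in the paper (linearisation):
  the Jacobian matrix of F at E has an eigenvalue with positive real part.\<close>
definition unstable_steady_state :: "(real^8 \<Rightarrow> real^8) \<Rightarrow> real^8 \<Rightarrow> bool" where
  "unstable_steady_state F E \<longleftrightarrow>
     (\<exists>L. (F has_derivative L) (at E within orthant8) \<and>
        (\<exists>(\<nu>::complex) (v::complex^8). v \<noteq> 0 \<and>
            (\<chi> i. \<Sum>j\<in>UNIV. complex_of_real (matrix L $ i $ j) * v $ j) = (\<chi> i. \<nu> * v $ i)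
            \<and> 0 < Re \<nu>))"

text \<open>s is the larger one (lambda_2^{i2}) of the two solutions of mu_2(S) = c.\<close>
definition larger_root :: "(real \<Rightarrow> real) \<Rightarrow> real \<Rightarrow> real \<Rightarrow> bool" where
  "larger_root \<mu>2 c s \<longleftrightarrow> \<mu>2 s = c \<and> (\<exists>s'. 0 < s' \<and> s' < s \<and> \<mu>2 s' = c)"

end

theory Submission
  imports Defs
begin

lemma vec_deriv:
  fixes f :: "real^'n \<Rightarrow> real^'m"
  assumes "\<And>i. ((\<lambda>x. f x $ i) has_derivative (\<lambda>h. f' h $ i)) (at a within S)"
  shows "(f has_derivative f') (at a within S)"
  unfolding has_derivative_componentwise_within[of f]
  using assms by (auto simp: Basis_vec_def cart_eq_inner_axis[symmetric])

lemma lin_matrix: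
  fixes L :: "real^'n \<Rightarrow> real^'m"
  assumes "linear L" shows "(\<Sum>j\<in>UNIV. matrix L $ i $ j * v $ j) = L v $ i"
proof -
  have "Vector_Spaces.linear (*s) (*s) L" using assms by (simp add: linear_matrix_vector_mul_eq)
  from matrix_works[OF this, of v] show ?thesis
    by (simp add: matrix_vector_mult_def vec_eq_iff)
qed

lemma unstable_intro:
  fixes F L :: "real^8 \<Rightarrow> real^8"
  assumes d: "(F has_derivative L) (at E within orthant8)" and nz: "vr \<noteq> 0"
    and ev: "L vr = \<nu> *\<^sub>R vr" and pos: "0 < \<nu>"
  shows "unstable_steady_state F E"
  unfolding unstable_steady_state_def
proof (intro exI conjI)
  show "(F has_derivative L) (at E within orthant8)" by (rule d)
  have lin: "linear L" using d has_derivative_bounded_linear bounded_linear.linear by blast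
  from nz obtain i where i: "vr $ i \<noteq> 0" by (auto simp: vec_eq_iff)
  show "(\<chi> i. complex_of_real (vr $ i)) \<noteq> 0"
  proof
    assume "(\<chi> i. complex_of_real (vr $ i)) = 0"
    then have "complex_of_real (vr $ i) = 0" by (metis vec_lambda_beta zero_index)
    with i show False by simp
  qed
  show "(\<chi> i. \<Sum>j\<in>UNIV. complex_of_real (matrix L $ i $ j) * (\<chi> i. complex_of_real (vr $ i)) $ j) =
        (\<chi> i. complex_of_real \<nu> * (\<chi> i. complex_of_real (vr $ i)) $ i)"
  proof (subst vec_eq_iff, intro allI)
    fix i
    have "(\<Sum>j\<in>UNIV. complex_of_real (matrix L $ i $ j) * complex_of_real (vr $ j))
        = complex_of_real (\<Sum>j\<in>UNIV. matrix L $ i $ j * vr $ j)" by simp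
    also have "\<dots> = complex_of_real (L vr $ i)" using lin_matrix[OF lin] by simp
    also have "\<dots> = complex_of_real \<nu> * complex_of_real (vr $ i)" using ev by simp
    finally show "(\<chi> i. \<Sum>j\<in>UNIV. complex_of_real (matrix L $ i $ j) * (\<chi> i. complex_of_real (vr $ i)) $ j) $ i =
        (\<chi> i. complex_of_real \<nu> * (\<chi> i. complex_of_real (vr $ i)) $ i) $ i" by simp
  qed
  show "0 < Re (complex_of_real \<nu>)" using pos by simp
qed

definition vec8 :: "real \<Rightarrow> real \<Rightarrow> real \<Rightarrow> real \<Rightarrow> real \<Rightarrow> real \<Rightarrow> real \<Rightarrow> real \<Rightarrow> real^8" where
  "vec8 a0 a1 a2 a3 a4 a5 a6 a7 = (\<chi> i. if i = 0 then a0 else if i = 1 then a1 else if i = 2 then a2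
     else if i = 3 then a3 else if i = 4 then a4 else if i = 5 then a5 else if i = 6 then a6 else a7)"

lemma vec8_nth[simp]:
  "vec8 a0 a1 a2 a3 a4 a5 a6 a7 $ 0 = a0" "vec8 a0 a1 a2 a3 a4 a5 a6 a7 $ 1 = a1"
  "vec8 a0 a1 a2 a3 a4 a5 a6 a7 $ 2 = a2" "vec8 a0 a1 a2 a3 a4 a5 a6 a7 $ 3 = a3"
  "vec8 a0 a1 a2 a3 a4 a5 a6 a7 $ 4 = a4" "vec8 a0 a1 a2 a3 a4 a5 a6 a7 $ 5 = a5"
  "vec8 a0 a1 a2 a3 a4 a5 a6 a7 $ 6 = a6" "vec8 a0 a1 a2 a3 a4 a5 a6 a7 $ 7 = a7"
  by (simp_all add: vec8_def)

lemma vec8_scaleR: "c *\<^sub>R vec8 a0 a1 a2 a3 a4 a5 a6 a7 = vec8 (c*a0) (c*a1) (c*a2) (c*a3) (c*a4) (c*a5) (c*a6) (c*a7)"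
  by (simp add: vec8_def vec_eq_iff)

lemma vec8_eq: "a0 = b0 \<Longrightarrow> a1 = b1 \<Longrightarrow> a2 = b2 \<Longrightarrow> a3 = b3 \<Longrightarrow> a4 = b4 \<Longrightarrow> a5 = b5 \<Longrightarrow> a6 = b6 \<Longrightarrow> a7 = b7 \<Longrightarrow>
  vec8 a0 a1 a2 a3 a4 a5 a6 a7 = vec8 b0 b1 b2 b3 b4 b5 b6 b7" by simp

lemma vec8_nz: "a3 \<noteq> 0 \<or> a6 \<noteq> 0 \<or> a7 \<noteq> 0 \<Longrightarrow> vec8 a0 a1 a2 a3 a4 a5 a6 a7 \<noteq> 0"
  by (metis vec8_nth zero_index)

definition jac where
"jac \<mu>1 \<mu>2 \<mu>1' \<mu>2' D1 D2 \<alpha> k1 k2 k3 E h = (vec8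
 (- D1 * h$0 - k1 * (\<mu>1' (E$0) * h$0 * E$1 + \<mu>1 (E$0) * h$1))
 (\<mu>1' (E$0) * h$0 * E$1 + (\<mu>1 (E$0) - \<alpha>*D1) * h$1)
 (- D1 * h$2 + k2 * (\<mu>1' (E$0) * h$0 * E$1 + \<mu>1 (E$0) * h$1) - k3 * (\<mu>2' (E$2) * h$2 * E$3 + \<mu>2 (E$2) * h$3))
 (\<mu>2' (E$2) * h$2 * E$3 + (\<mu>2 (E$2) - \<alpha>*D1) * h$3)
 (D2 * (h$0 - h$4) - k1 * (\<mu>1' (E$4) * h$4 * E$5 + \<mu>1 (E$4) * h$5))
 (\<alpha>*D2*(h$1 - h$5) + \<mu>1' (E$4) * h$4 * E$5 + \<mu>1 (E$4) * h$5)
 (D2*(h$2 - h$6) + k2 * (\<mu>1' (E$4) * h$4 * E$5 + \<mu>1 (E$4) * h$5) - k3 * (\<mu>2' (E$6) * h$6 * E$7 + \<mu>2 (E$6) * h$7))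
 (\<alpha>*D2*(h$3 - h$7) + \<mu>2' (E$6) * h$6 * E$7 + \<mu>2 (E$6) * h$7))"

lemma field_deriv:
  assumes E: "E \<in> orthant8"
    and d1: "\<And>s. 0 \<le> s \<Longrightarrow> (\<mu>1 has_real_derivative \<mu>1' s) (at s within {0..})"
    and d2: "\<And>s. 0 \<le> s \<Longrightarrow> (\<mu>2 has_real_derivative \<mu>2' s) (at s within {0..})"
  shows "(chemo_field \<mu>1 \<mu>2 D r \<alpha> k1 k2 k3 S1in S2in has_derivative jac \<mu>1 \<mu>2 \<mu>1' \<mu>2' (D/r) (D/(1-r)) \<alpha> k1 k2 k3 E)
           (at E within orthant8)"
proof -
  have nth: "\<And>k. ((\<lambda>x::real^8. x$k) has_derivative (\<lambda>h. h$k)) (at E within orthant8)"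
    by (rule bounded_linear.has_derivative[OF bounded_linear_vec_nth has_derivative_ident])
  have img: "\<And>k. (\<lambda>x::real^8. x$k) ` orthant8 \<subseteq> {0..}" by (auto simp: orthant8_def)
  have c1: "\<And>k. ((\<lambda>x. \<mu>1 (x$k)) has_derivative (\<lambda>h. \<mu>1' (E$k) * h$k)) (at E within orthant8)"
    using has_derivative_in_compose2[of "{0..}" \<mu>1 "\<lambda>s h. \<mu>1' s * h", OF _ img E nth]
      d1 by (simp add: has_field_derivative_imp_has_derivative)
  have c2: "\<And>k. ((\<lambda>x. \<mu>2 (x$k)) has_derivative (\<lambda>h. \<mu>2' (E$k) * h$k)) (at E within orthant8)"
    using has_derivative_in_compose2[of "{0..}" \<mu>2 "\<lambda>s h. \<mu>2' s * h", OF _ img E nth]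
      d2 by (simp add: has_field_derivative_imp_has_derivative)
  obtain D1 D2 where D1: "D/r = D1" and D2: "D/(1-r) = D2" by blast
  show ?thesis
  proof (rule vec_deriv)
    fix i :: 8
    consider "i = 0" | "i = 1" | "i = 2" | "i = 3" | "i = 4" | "i = 5" | "i = 6"
      | "i \<noteq> 0 \<and> i \<noteq> 1 \<and> i \<noteq> 2 \<and> i \<noteq> 3 \<and> i \<noteq> 4 \<and> i \<noteq> 5 \<and> i \<noteq> 6" by blast
    then show "((\<lambda>x. chemo_field \<mu>1 \<mu>2 D r \<alpha> k1 k2 k3 S1in S2in x $ i) has_derivative
          (\<lambda>h. jac \<mu>1 \<mu>2 \<mu>1' \<mu>2' (D/r) (D/(1-r)) \<alpha> k1 k2 k3 E h $ i)) (at E within orthant8)"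
      unfolding chemo_field_def jac_def Let_def vec8_def D1 D2
      apply cases
      apply (simp_all)
      apply (auto intro!: derivative_eq_intros c1 c2 nth simp: algebra_simps diff_divide_distrib)
      done
  qed
qed



lemma unstable_from_jac:
  assumes E: "E \<in> orthant8"
    and d1: "\<And>s. 0 \<le> s \<Longrightarrow> (\<mu>1 has_real_derivative \<mu>1' s) (at s within {0..})"
    and d2: "\<And>s. 0 \<le> s \<Longrightarrow> (\<mu>2 has_real_derivative \<mu>2' s) (at s within {0..})"
    and ex: "\<exists>vr \<nu>. vr \<noteq> 0 \<and> jac \<mu>1 \<mu>2 \<mu>1' \<mu>2' (D/r) (D/(1-r)) \<alpha> k1 k2 k3 E vr = \<nu> *\<^sub>R vr \<and> 0 < \<nu>"
  shows "unstable_steady_state (chemo_field \<mu>1 \<mu>2 D r \<alpha> k1 k2 k3 S1in S2in) E"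
  using ex unstable_intro[OF field_deriv[OF E d1 d2]] by blast

lemma quad_root: fixes a b c :: real assumes "0 < b*c" shows "\<exists>\<nu>>0. \<nu>^2 = a*\<nu> + b*c"
proof -
  define q where "q = sqrt (a^2 + 4*(b*c))"
  have s2: "q^2 = a^2 + 4*(b*c)" unfolding q_def using assms
    by (simp add: add_nonneg_pos)
  have "sqrt (a^2) < q" unfolding q_def using assms by (simp del: real_sqrt_abs)
  then have "\<bar>a\<bar> < q" by simp
  then have "-q < a" by (simp add: abs_less_iff)
  then have pos: "0 < (a + q)/2" by simp
  have "((a+q)/2)^2 = (a^2 + q^2 + 2*a*q)/4" by (simp add: power_divide power2_sum)
  also have "\<dots> = (2*(a*a) + 2*a*q + 4*(b*c))/4" using s2 by (simp add: power2_eq_square)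
  also have "\<dots> = a*((a+q)/2) + b*c" by (simp add: add_divide_distrib ring_distribs)
  finally have "((a+q)/2)^2 = a*((a+q)/2) + b*c" .
  with pos show ?thesis by blast
qed



lemma lin2: fixes pa pb pc pd qa qb :: real
  shows "\<exists>t ua ub. (t \<noteq> 0 \<or> ua \<noteq> 0 \<or> ub \<noteq> 0) \<and> pa*ua + pb*ub = t*qa \<and> pc*ua + pd*ub = t*qb"
proof (cases "pa*pd - pb*pc = 0")
  case False
  have e1: "pa*(qa*pd - pb*qb) + pb*(pa*qb - pc*qa) = (pa*pd - pb*pc)*qa" by algebra
  have e2: "pc*(qa*pd - pb*qb) + pd*(pa*qb - pc*qa) = (pa*pd - pb*pc)*qb" by algebra
  show ?thesis using False e1 e2 by blast
next
  case True
  then have det: "pa*pd = pb*pc" by simp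
  show ?thesis
  proof (cases "pa \<noteq> 0 \<or> pb \<noteq> 0")
    case True2: True
    have "pa*(-pb) + pb*pa = 0*qa" by simp
    moreover have "pc*(-pb) + pd*pa = 0*qb" using det by (simp add: mult.commute)
    ultimately show ?thesis using True2 by (metis neg_equal_0_iff_equal)
  next
    case False2: False
    show ?thesis
    proof (cases "pc \<noteq> 0 \<or> pd \<noteq> 0")
      case True
      have "pa*(-pd) + pb*pc = 0*qa" using False2 by simp
      moreover have "pc*(-pd) + pd*pc = 0*qb" by simp
      ultimately show ?thesis using True by (metis neg_equal_0_iff_equal)
    next
      case False
      have "pa*1 + pb*0 = 0*qa" "pc*1 + pd*0 = 0*qb" using False False2 by simp_all
      then show ?thesis by (metis one_neq_zero)
    qed
  qed
qed


lemma caseD: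
  fixes E :: "real^8"
  assumes q: "\<mu>2 (E$6) = \<alpha>*D2" and neg: "\<mu>2' (E$6) < 0" and X: "0 < E$7"
    and k3: "0<k3" and al: "0<\<alpha>" and D2: "0<D2"
  shows "\<exists>vr \<nu>. vr \<noteq> 0 \<and> jac \<mu>1 \<mu>2 \<mu>1' \<mu>2' D1 D2 \<alpha> k1 k2 k3 E vr = \<nu> *\<^sub>R vr \<and> 0 < \<nu>"
proof -
  define c where "c = \<mu>2' (E$6) * E$7"
  have c: "c < 0" unfolding c_def using neg X by (simp add: mult_neg_pos)
  have "0 < k3*\<alpha>*D2" using k3 al D2 by simp
  then have "k3*\<alpha>*D2*c < 0" using c by (simp add: mult_pos_neg)
  then have "0 < (-k3*\<alpha>*D2)*c" by simp
  from quad_root[OF this, of "-D2 - k3*c"] obtain \<nu> where nu: "0 < \<nu>"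
    and eq: "\<nu>^2 = (-D2 - k3*c)*\<nu> + (-k3*\<alpha>*D2)*c" by blast
  show ?thesis
  proof (intro exI conjI)
    show "vec8 0 0 0 0 0 0 \<nu> c \<noteq> 0" using nu by (intro vec8_nz) simp
    show "jac \<mu>1 \<mu>2 \<mu>1' \<mu>2' D1 D2 \<alpha> k1 k2 k3 E (vec8 0 0 0 0 0 0 \<nu> c) = \<nu> *\<^sub>R vec8 0 0 0 0 0 0 \<nu> c"
      unfolding jac_def vec8_scaleR
      apply (rule vec8_eq)
      apply simp_all
      using eq q unfolding c_def power2_eq_square by algebra+
    show "0 < \<nu>" by (rule nu)
  qed
qed



lemma caseB:
  fixes E :: "real^8"
  assumes q: "\<mu>2 (E$2) = \<alpha>*D1" and neg: "\<mu>2' (E$2) < 0" and X: "0 < E$3"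
    and k3: "0<k3" and al: "0<\<alpha>" and D1: "0<D1"
  shows "\<exists>vr \<nu>. vr \<noteq> 0 \<and> jac \<mu>1 \<mu>2 \<mu>1' \<mu>2' D1 D2 \<alpha> k1 k2 k3 E vr = \<nu> *\<^sub>R vr \<and> 0 < \<nu>"
proof -
  define c where "c = \<mu>2' (E$2) * E$3"
  have c: "c < 0" unfolding c_def using neg X by (simp add: mult_neg_pos)
  have "0 < k3*\<alpha>*D1" using k3 al D1 by simp
  then have "k3*\<alpha>*D1*c < 0" using c by (simp add: mult_pos_neg)
  then have "0 < (-k3*\<alpha>*D1)*c" by simp
  from quad_root[OF this, of "-D1 - k3*c"] obtain \<nu> where nu: "0 < \<nu>"
    and eq: "\<nu>^2 = (-D1 - k3*c)*\<nu> + (-k3*\<alpha>*D1)*c" by blast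
  define p where "p = \<mu>2' (E$6) * E$7"
  define qq where "qq = \<mu>2 (E$6)"
  obtain t u6 u7 where nz: "t \<noteq> 0 \<or> u6 \<noteq> 0 \<or> u7 \<noteq> 0"
    and e6: "(\<nu> + D2 + k3*p)*u6 + (k3*qq)*u7 = t*(D2*\<nu>)"
    and e7: "(-p)*u6 + (\<nu> + \<alpha>*D2 - qq)*u7 = t*(\<alpha>*D2*c)"
    using lin2[where pa="\<nu> + D2 + k3*p" and pb="k3*qq" and qa="D2*\<nu>" and pc="-p"
      and pd="\<nu> + \<alpha>*D2 - qq" and qb="\<alpha>*D2*c"] by blast
  show ?thesis
  proof (intro exI conjI)
    show "vec8 0 0 (t*\<nu>) (t*c) 0 0 u6 u7 \<noteq> 0" using nz c by (intro vec8_nz) auto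
    show "jac \<mu>1 \<mu>2 \<mu>1' \<mu>2' D1 D2 \<alpha> k1 k2 k3 E (vec8 0 0 (t*\<nu>) (t*c) 0 0 u6 u7) = \<nu> *\<^sub>R vec8 0 0 (t*\<nu>) (t*c) 0 0 u6 u7"
      unfolding jac_def vec8_scaleR
      apply (rule vec8_eq)
      apply simp_all
      using eq q e6 e7 unfolding c_def p_def qq_def power2_eq_square by algebra+
    show "0 < \<nu>" by (rule nu)
  qed
qed



lemma larger_root_gt:
  fixes \<mu>2 \<mu>2' :: "real \<Rightarrow> real"
  assumes d2: "\<And>s. 0 \<le> s \<Longrightarrow> (\<mu>2 has_real_derivative \<mu>2' s) (at s within {0..})"
    and up: "\<And>s. 0 < s \<Longrightarrow> s < S2m \<Longrightarrow> 0 < \<mu>2' s"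
    and lr: "larger_root \<mu>2 c s"
  shows "S2m < s"
proof (rule ccontr)
  assume "\<not> S2m < s"
  then have le: "s \<le> S2m" by simp
  from lr obtain s' where s': "0 < s'" "s' < s" "\<mu>2 s' = c" and sc: "\<mu>2 s = c"
    unfolding larger_root_def by blast
  have "\<And>x. s' \<le> x \<Longrightarrow> x \<le> s \<Longrightarrow> (\<mu>2 has_real_derivative \<mu>2' x) (at x)"
  proof -
    fix x assume "s' \<le> x" "x \<le> s"
    then have x: "0 < x" using s' by simp
    have "at x within {0..} = at x"
      by (rule at_within_interior) (use x in simp)
    with d2[of x] x show "(\<mu>2 has_real_derivative \<mu>2' x) (at x)" by simp
  qed
  from MVT2[OF s'(2) this] obtain z where z: "s' < z" "z < s" "\<mu>2 s - \<mu>2 s' = (s - s') * \<mu>2' z"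
    by blast
  have "0 < \<mu>2' z" using up[of z] z s' le by simp
  then have "0 < (s - s') * \<mu>2' z" using s' by simp
  moreover have "\<mu>2 s - \<mu>2 s' = 0" using sc s'(3) by simp
  ultimately show False using z(3) by linarith
qed


theorem proposition4:
  fixes \<mu>1 \<mu>2 \<mu>1' \<mu>2' :: "real \<Rightarrow> real"
    and D r \<alpha> k1 k2 k3 S1in S2in m1 S2m :: real
  assumes D_pos: "0 < D" and r_range: "0 < r" "r < 1"
    and \<alpha>_range: "0 < \<alpha>" "\<alpha> < 1"
    and k_pos: "0 < k1" "0 < k2" "0 < k3"
    and Sin_nonneg: "0 \<le> S1in" "0 \<le> S2in"
    \<comment> \<open>H1\<close>
    and H1_C1: "\<And>s. 0 \<le> s \<Longrightarrow> (\<mu>1 has_real_derivative \<mu>1' s) (at s within {0..})"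
    and H1_cont: "continuous_on {0..} \<mu>1'"
    and H1_zero: "\<mu>1 0 = 0"
    and H1_lim: "(\<mu>1 \<longlongrightarrow> m1) at_top"
    and H1_incr: "\<And>s. 0 < s \<Longrightarrow> 0 < \<mu>1' s"
    \<comment> \<open>H2\<close>
    and H2_C1: "\<And>s. 0 \<le> s \<Longrightarrow> (\<mu>2 has_real_derivative \<mu>2' s) (at s within {0..})"
    and H2_cont: "continuous_on {0..} \<mu>2'"
    and H2_zero: "\<mu>2 0 = 0"
    and H2_lim: "(\<mu>2 \<longlongrightarrow> 0) at_top"
    and H2_Sm: "0 < S2m"
    and H2_up: "\<And>s. 0 < s \<Longrightarrow> s < S2m \<Longrightarrow> 0 < \<mu>2' s"
    and H2_down: "\<And>s. S2m < s \<Longrightarrow> \<mu>2' s < 0"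
  shows
   "let F = chemo_field \<mu>1 \<mu>2 D r \<alpha> k1 k2 k3 S1in S2in;
        D1 = D / r; D2 = D / (1 - r) in
    \<comment> \<open>E_00^02\<close>
    (\<forall>E. steady_state F E \<and>
         E $ 0 = S1in \<and> E $ 1 = 0 \<and> E $ 2 = S2in \<and> E $ 3 = 0 \<and>
         E $ 4 = S1in \<and> E $ 5 = 0 \<and> larger_root \<mu>2 (\<alpha> * D2) (E $ 6) \<and>
         E $ 7 = (S2in - E $ 6) / (\<alpha> * k3) \<and> 0 < E $ 7
       \<longrightarrow> unstable_steady_state F E) \<and>
    \<comment> \<open>E_00^12\<close>
    (\<forall>E. steady_state F E \<and>
         E $ 0 = S1in \<and> E $ 1 = 0 \<and> E $ 2 = S2in \<and> E $ 3 = 0 \<and>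
         \<mu>1 (E $ 4) = \<alpha> * D2 \<and> E $ 5 = (S1in - E $ 4) / (\<alpha> * k1) \<and> 0 < E $ 5 \<and>
         larger_root \<mu>2 (\<alpha> * D2) (E $ 6) \<and> 0 < E $ 7
       \<longrightarrow> unstable_steady_state F E) \<and>
    \<comment> \<open>E_10^12\<close>
    (\<forall>E. steady_state F E \<and>
         \<mu>1 (E $ 0) = \<alpha> * D1 \<and> E $ 1 = (S1in - E $ 0) / (\<alpha> * k1) \<and> 0 < E $ 1 \<and>
         E $ 2 = S2in + k2 / k1 * (S1in - E $ 0) \<and> E $ 3 = 0 \<and>
         0 < E $ 5 \<and> larger_root \<mu>2 (\<alpha> * D2) (E $ 6) \<and> 0 < E $ 7
       \<longrightarrow> unstable_steady_state F E) \<and>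
    \<comment> \<open>E_02^01\<close>
    (\<forall>E. steady_state F E \<and>
         E $ 0 = S1in \<and> E $ 1 = 0 \<and> larger_root \<mu>2 (\<alpha> * D1) (E $ 2) \<and>
         E $ 3 = (S2in - E $ 2) / (\<alpha> * k3) \<and> 0 < E $ 3 \<and>
         E $ 5 = 0 \<and> 0 < E $ 7
       \<longrightarrow> unstable_steady_state F E) \<and>
    \<comment> \<open>E_02^11\<close>
    (\<forall>E. steady_state F E \<and>
         E $ 0 = S1in \<and> E $ 1 = 0 \<and> larger_root \<mu>2 (\<alpha> * D1) (E $ 2) \<and>
         E $ 3 = (S2in - E $ 2) / (\<alpha> * k3) \<and> 0 < E $ 3 \<and>
         0 < E $ 5 \<and> 0 < E $ 7
       \<longrightarrow> unstable_steady_state F E) \<and>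
    \<comment> \<open>E_12^11\<close>
    (\<forall>E. steady_state F E \<and>
         \<mu>1 (E $ 0) = \<alpha> * D1 \<and> E $ 1 = (S1in - E $ 0) / (\<alpha> * k1) \<and> 0 < E $ 1 \<and>
         larger_root \<mu>2 (\<alpha> * D1) (E $ 2) \<and> 0 < E $ 3 \<and>
         0 < E $ 5 \<and> 0 < E $ 7
       \<longrightarrow> unstable_steady_state F E)"
proof -
  have D1: "0 < D/r" and D2: "0 < D/(1-r)" using D_pos r_range by simp_all
  have root: "\<And>c s. larger_root \<mu>2 c s \<Longrightarrow> \<mu>2 s = c \<and> \<mu>2' s < 0"
  proof -
    fix c s assume lr: "larger_root \<mu>2 c s"
    have "S2m < s" by (rule larger_root_gt[OF H2_C1 H2_up lr])
    then show "\<mu>2 s = c \<and> \<mu>2' s < 0" using H2_down lr unfolding larger_root_def by blast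
  qed
  have UD: "\<And>E. E \<in> orthant8 \<Longrightarrow> \<mu>2 (E$6) = \<alpha>*(D/(1-r)) \<Longrightarrow> \<mu>2' (E$6) < 0 \<Longrightarrow> 0 < E$7 \<Longrightarrow>
      unstable_steady_state (chemo_field \<mu>1 \<mu>2 D r \<alpha> k1 k2 k3 S1in S2in) E"
  proof -
    fix E assume E: "E \<in> orthant8" and h1: "\<mu>2 (E$6) = \<alpha>*(D/(1-r))"
      and h2: "\<mu>2' (E$6) < 0" and h3: "0 < E$7"
    show "unstable_steady_state (chemo_field \<mu>1 \<mu>2 D r \<alpha> k1 k2 k3 S1in S2in) E"
      apply (rule unstable_from_jac[OF E H1_C1 H2_C1], assumption, assumption)
      apply (rule caseD)
      using h1 h2 h3 k_pos(3) \<alpha>_range(1) D2 by auto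
  qed
  have UB: "\<And>E. E \<in> orthant8 \<Longrightarrow> \<mu>2 (E$2) = \<alpha>*(D/r) \<Longrightarrow> \<mu>2' (E$2) < 0 \<Longrightarrow> 0 < E$3 \<Longrightarrow>
      unstable_steady_state (chemo_field \<mu>1 \<mu>2 D r \<alpha> k1 k2 k3 S1in S2in) E"
  proof -
    fix E assume E: "E \<in> orthant8" and h1: "\<mu>2 (E$2) = \<alpha>*(D/r)"
      and h2: "\<mu>2' (E$2) < 0" and h3: "0 < E$3"
    show "unstable_steady_state (chemo_field \<mu>1 \<mu>2 D r \<alpha> k1 k2 k3 S1in S2in) E"
      apply (rule unstable_from_jac[OF E H1_C1 H2_C1], assumption, assumption)
      apply (rule caseB)
      using h1 h2 h3 k_pos(3) \<alpha>_range(1) D1 by auto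
  qed
  show ?thesis unfolding Let_def steady_state_def
    apply (intro conjI allI impI)
    using UD UB root by blast+
qed

end
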